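(* Assume conditions (A) and (B) hold, and let $\epsilon>0$ be small enough that $B_\epsilon(L_0)$ and $B_\epsilon(f^{-1}(p_0))$ are disjoint from each other and from $\mathcal{I}$. Then there exists $\delta>0$ such that for all $T\in\mathcal{T}(T_0,\delta)$: (i) $f_T\big(\mathbb{P}^2\setminus (B_\epsilon(f^{-1}(p_0))\cup\mathcal I)\big)\subset B_\epsilon(L_0)$; (ii) $f_T^{-1}\big(\mathbb{P}^2\setminus B_\epsilon(L_0)\big)\subset B_\epsilon(f^{-1}(p_0))$. In particular $f_T(\mathcal{I})\subset B_\epsilon(L_0)$, and every ergodic $f_T$-invariant probability measure is supported entirely in $B_\epsilon(L_0)$ or entirely in $B_\epsilon(f^{-1}(p_0))$. If in addition condition (C) holds, then $\delta$ may be chosen so that moreover every point of $B_\epsilon(f^{-1}(p_0))$ is a regular point of $f_T$ and consequently $B_\epsilon(L_0)$ contains all critical values of $f_T$.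
   Context: $f:\mathbb{P}^2\dashrightarrow\mathbb{P}^2$ is a dominant rational map with indeterminacy set $\mathcal{I}$ (finite), topological degree $\lambda_2=\lambda_2(f)$; for $p\in\mathcal I$, $f(p)$ is the set of all limits $\lim f(p_j)$ with $p_j\to p$, and for a curve $V$, $f(V):=\overline{f(V\setminus\mathcal{I})}$. $f^{-1}(p_0)$ is the set of points $q\notin\mathcal I$ with $f(q)=p_0$. For $T\in\mathrm{Aut}(\mathbb{P}^2)$, $f_T=T\circ f$. Distances use the Fubini–Study metric and $B_r(X)=\{p:\mathrm{dist}(p,X)<r\}$. Fix a line $L_0\subset\mathbb{P}^2$, a point $p_0\notin L_0$, and a surjective linear map $T_0:\mathbb{P}^2\setminus\{p_0\}\to L_0$ (induced by a rank-2 linear map of $\mathbb{C}^3$ with kernel the line $p_0$ and image the plane $L_0$). For $\delta>0$, $\mathcal{T}(T_0,\delta):=\{T\in\mathrm{Aut}(\mathbb{P}^2):\mathrm{dist}(T(p),T_0(p))<\delta \text{ for all } p\notin B_\delta(p_0)\}$ (a nonempty open set). Conditions: (A) $p_0\notin f(\mathcal{I})\cup f(L_0)$; (B) $L_0\cap\mathcal{I}=\emptyset$; (C) $p_0$ is a regular value of $f$ with $\lambda_2$ distinct preimages; (D) $\deg f(L_0)\ge 2$. *)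

theory Defs
  imports "HOL-Analysis.Analysis" "HOL-Probability.Probability"
begin

text \<open>Concrete model of the complex projective plane: points are complex lines
in complex^3 (the span of a nonzero vector).\<close>

type_synonym vec3 = "complex^3"

definition cline :: "vec3 \<Rightarrow> vec3 set" where
  "cline v = range (\<lambda>c::complex. c *s v)"

typedef P2 = "{L. \<exists>v::vec3. v \<noteq> 0 \<and> L = cline v}"
  by (rule exI[of _ "cline (axis 1 1)"], rule CollectI, rule exI[of _ "axis 1 1"])
     (simp add: axis_eq_0_iff)

definition proj :: "vec3 \<Rightarrow> P2" where
  "proj v = Abs_P2 (cline v)"

definition rep :: "P2 \<Rightarrow> vec3" where
  "rep p = (SOME v. v \<noteq> 0 \<and> Rep_P2 p = cline v)"

definition herm :: "vec3 \<Rightarrow> vec3 \<Rightarrow> complex" where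
  "herm u v = (\<Sum>i\<in>UNIV. u $ i * cnj (v $ i))"

definition fs_dist :: "P2 \<Rightarrow> P2 \<Rightarrow> real" where
  "fs_dist p q = arccos (cmod (herm (rep p) (rep q)) / (norm (rep p) * norm (rep q)))"

definition fs_ball :: "P2 set \<Rightarrow> real \<Rightarrow> P2 set" where
  "fs_ball X r = {p. \<exists>x\<in>X. fs_dist p x < r}"

definition fs_conv :: "(nat \<Rightarrow> P2) \<Rightarrow> P2 \<Rightarrow> bool" where
  "fs_conv s p \<longleftrightarrow> ((\<lambda>j. fs_dist (s j) p) \<longlonglongrightarrow> 0)"

definition fs_open :: "P2 set \<Rightarrow> bool" where
  "fs_open U \<longleftrightarrow> (\<forall>p\<in>U. \<exists>r>0. {q. fs_dist q p < r} \<subseteq> U)"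

definition fs_closure :: "P2 set \<Rightarrow> P2 set" where
  "fs_closure A = {q. \<exists>s. (\<forall>j. s j \<in> A) \<and> fs_conv s q}"

definition fs_dense :: "P2 set \<Rightarrow> bool" where
  "fs_dense A \<longleftrightarrow> fs_closure A = UNIV"

definition hpoly :: "nat \<Rightarrow> (vec3 \<Rightarrow> complex) \<Rightarrow> bool" where
  "hpoly d P \<longleftrightarrow> (\<exists>c :: nat \<times> nat \<times> nat \<Rightarrow> complex. \<forall>x.
     P x = (\<Sum>m\<in>{m. fst m + fst (snd m) + snd (snd m) = d}.
              c m * x$1 ^ fst m * x$2 ^ fst (snd m) * x$3 ^ snd (snd m)))"

text \<open>F is a homogeneous lift of a rational self-map of P^2: three homogeneous
polynomials of a common degree without a common nonconstant factor.\<close>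
definition rat_map :: "(vec3 \<Rightarrow> vec3) \<Rightarrow> bool" where
  "rat_map F \<longleftrightarrow> (\<exists>d. (\<forall>i. hpoly d (\<lambda>x. F x $ i)) \<and>
     \<not> (\<exists>e G H. 1 \<le> e \<and> e \<le> d \<and> hpoly e G \<and> (\<forall>i. hpoly (d - e) (H i)) \<and>
            (\<forall>x i. F x $ i = G x * H i x)))"

definition indet :: "(vec3 \<Rightarrow> vec3) \<Rightarrow> P2 set" where
  "indet F = {proj v | v. v \<noteq> 0 \<and> F v = 0}"

definition fmap :: "(vec3 \<Rightarrow> vec3) \<Rightarrow> P2 \<Rightarrow> P2" where
  "fmap F p = proj (F (rep p))"

definition preim :: "(vec3 \<Rightarrow> vec3) \<Rightarrow> P2 \<Rightarrow> P2 set" where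
  "preim F q = {p. p \<notin> indet F \<and> fmap F p = q}"

text \<open>\<open>f(p)\<close> for an indeterminacy point p: all limits of \<open>f(p_j)\<close>, \<open>p_j \<rightarrow> p\<close>.\<close>
definition limset :: "(vec3 \<Rightarrow> vec3) \<Rightarrow> P2 \<Rightarrow> P2 set" where
  "limset F p = {q. \<exists>s. (\<forall>j. s j \<notin> indet F) \<and> fs_conv s p \<and> fs_conv (\<lambda>j. fmap F (s j)) q}"

definition img_indet :: "(vec3 \<Rightarrow> vec3) \<Rightarrow> P2 set" where
  "img_indet F = (\<Union>p\<in>indet F. limset F p)"

definition img_curve :: "(vec3 \<Rightarrow> vec3) \<Rightarrow> P2 set \<Rightarrow> P2 set" where
  "img_curve F V = fs_closure (fmap F ` (V - indet F))"

definition dominant :: "(vec3 \<Rightarrow> vec3) \<Rightarrow> bool" where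
  "dominant F \<longleftrightarrow> fs_dense (fmap F ` (UNIV - indet F))"

definition top_degree :: "(vec3 \<Rightarrow> vec3) \<Rightarrow> nat" where
  "top_degree F = (THE n. \<exists>U. fs_open U \<and> fs_dense U \<and>
      (\<forall>q\<in>U. finite (preim F q) \<and> card (preim F q) = n))"

definition jac :: "(vec3 \<Rightarrow> vec3) \<Rightarrow> vec3 \<Rightarrow> complex" where
  "jac F v = det (\<chi> i j. deriv (\<lambda>t. F (v + t *s axis j 1) $ i) 0)"

definition regular_pt :: "(vec3 \<Rightarrow> vec3) \<Rightarrow> P2 \<Rightarrow> bool" where
  "regular_pt F p \<longleftrightarrow> p \<notin> indet F \<and> jac F (rep p) \<noteq> 0"

definition regular_value :: "(vec3 \<Rightarrow> vec3) \<Rightarrow> P2 \<Rightarrow> bool" where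
  "regular_value F q \<longleftrightarrow> (\<forall>p\<in>preim F q. regular_pt F p)"

definition critical_values :: "(vec3 \<Rightarrow> vec3) \<Rightarrow> P2 set" where
  "critical_values F = {fmap F p | p. p \<notin> indet F \<and> \<not> regular_pt F p}"

definition pline :: "vec3 \<Rightarrow> P2 set" where
  "pline a = {p. (\<Sum>i\<in>UNIV. a $ i * rep p $ i) = 0}"

definition autP :: "complex^3^3 \<Rightarrow> P2 \<Rightarrow> P2" where
  "autP M p = proj (M *v rep p)"

definition compT :: "complex^3^3 \<Rightarrow> (vec3 \<Rightarrow> vec3) \<Rightarrow> (vec3 \<Rightarrow> vec3)" where
  "compT M F = (\<lambda>v. M *v F v)"

text \<open>\<open>\<T>(T_0,\<delta>)\<close>, with \<open>T_0 = [A]\<close>, \<open>p_0 = [v_0]\<close>, expressed via matrices of the automorphisms.\<close>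
definition Tset :: "complex^3^3 \<Rightarrow> vec3 \<Rightarrow> real \<Rightarrow> (complex^3^3) set" where
  "Tset A v0 \<delta> = {M. invertible M \<and>
     (\<forall>p. \<delta> \<le> fs_dist p (proj v0) \<longrightarrow> fs_dist (autP M p) (proj (A *v rep p)) < \<delta>)}"

definition fs_borel :: "P2 measure" where
  "fs_borel = sigma UNIV {U. fs_open U}"

definition erg_inv :: "(vec3 \<Rightarrow> vec3) \<Rightarrow> P2 measure \<Rightarrow> bool" where
  "erg_inv F \<mu> \<longleftrightarrow> prob_space \<mu> \<and> sets \<mu> = sets fs_borel \<and>
     indet F \<in> sets \<mu> \<and> emeasure \<mu> (indet F) = 0 \<and>
     (\<forall>A\<in>sets \<mu>. {p. p \<notin> indet F \<and> fmap F p \<in> A} \<in> sets \<mu> \<and>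
        emeasure \<mu> {p. p \<notin> indet F \<and> fmap F p \<in> A} = emeasure \<mu> A) \<and>
     (\<forall>A\<in>sets \<mu>.
        emeasure \<mu> (({p. p \<notin> indet F \<and> fmap F p \<in> A} - A) \<union> (A - {p. p \<notin> indet F \<and> fmap F p \<in> A})) = 0
        \<longrightarrow> emeasure \<mu> A = 0 \<or> emeasure \<mu> A = 1)"

end

theory Submission
  imports Defs
begin


lemma cline_smult: "(c::complex) \<noteq> 0 \<Longrightarrow> cline (c *s v) = cline v"
proof -
  assume c: "c \<noteq> 0"
  have "range (\<lambda>k. k *s (c *s v)) = range (\<lambda>k. k *s v)"
  proof (intro set_eqI iffI)
    fix x assume "x \<in> range (\<lambda>k. k *s (c *s v))"
    then obtain k where "x = k *s (c *s v)" by auto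
    then have "x = (k*c) *s v" by (simp add: vector_smult_assoc)
    then show "x \<in> range (\<lambda>k. k *s v)" by blast
  next
    fix x assume "x \<in> range (\<lambda>k. k *s v)"
    then obtain k where "x = k *s v" by auto
    then have "x = (k / c) *s (c *s v)" using c by (simp add: vector_smult_assoc)
    then show "x \<in> range (\<lambda>k. k *s (c *s v))" by blast
  qed
  then show ?thesis by (simp add: cline_def)
qed

lemma rep_props: "rep p \<noteq> 0 \<and> Rep_P2 p = cline (rep p)"
proof -
  have "\<exists>v. v \<noteq> 0 \<and> Rep_P2 p = cline v" using Rep_P2[of p] by auto
  then show ?thesis unfolding rep_def by (rule someI_ex)
qed

lemma rep_nz[simp]: "rep p \<noteq> 0" using rep_props by blast

lemma proj_rep[simp]: "proj (rep p) = p"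
  unfolding proj_def using rep_props[of p] by (metis Rep_P2_inverse)

lemma cline_eq: assumes "v \<noteq> 0" "cline v = cline w" shows "\<exists>c. c \<noteq> 0 \<and> v = c *s w"
proof -
  have "v \<in> cline v" unfolding cline_def by (auto intro: range_eqI[of _ _ 1])
  then have "v \<in> cline w" using assms by simp
  then obtain c where "v = c *s w" unfolding cline_def by auto
  then show ?thesis using assms by auto
qed

lemma Rep_proj: "v \<noteq> 0 \<Longrightarrow> Rep_P2 (proj v) = cline v"
  unfolding proj_def by (rule Abs_P2_inverse) auto

lemma rep_proj: assumes "v \<noteq> 0" shows "\<exists>c. c \<noteq> 0 \<and> rep (proj v) = c *s v"
proof -
  have "cline (rep (proj v)) = cline v" using rep_props[of "proj v"] Rep_proj[OF assms] by simp
  then show ?thesis using cline_eq rep_nz by blast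
qed

lemma proj_smult: "(c::complex) \<noteq> 0 \<Longrightarrow> proj (c *s v) = proj v"
  unfolding proj_def by (simp add: cline_smult)

lemma proj_eq_iff: assumes "v \<noteq> 0" "w \<noteq> 0"
  shows "proj v = proj w \<longleftrightarrow> (\<exists>c. c \<noteq> 0 \<and> v = c *s w)"
proof
  assume "proj v = proj w"
  then have "Rep_P2 (proj v) = Rep_P2 (proj w)" by simp
  then have "cline v = cline w" using Rep_proj assms by simp
  then show "\<exists>c. c \<noteq> 0 \<and> v = c *s w" using cline_eq assms by blast
next
  assume "\<exists>c. c \<noteq> 0 \<and> v = c *s w"
  then show "proj v = proj w" using proj_smult by auto
qed

lemma rep_of_proj: assumes "v \<noteq> 0" "proj v = p" shows "\<exists>c. c \<noteq> 0 \<and> v = c *s rep p"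
  using proj_eq_iff[OF assms(1) rep_nz[of p]] assms by simp

lemma herm_smult_left: "herm (c *s u) v = c * herm u v"
  by (simp add: herm_def sum_distrib_left mult.assoc)
lemma herm_smult_right: "herm u (c *s v) = cnj c * herm u v"
  by (simp add: herm_def sum_distrib_left algebra_simps)
lemma herm_add_left: "herm (u + w) v = herm u v + herm w v"
  by (simp add: herm_def sum.distrib algebra_simps)
lemma herm_add_right: "herm u (v + w) = herm u v + herm u w"
  by (simp add: herm_def sum.distrib algebra_simps)
lemma herm_diff_left: "herm (u - w) v = herm u v - herm w v"
  by (simp add: herm_def sum_subtractf algebra_simps)
lemma herm_diff_right: "herm u (v - w) = herm u v - herm u w"
  by (simp add: herm_def sum_subtractf algebra_simps)
lemma herm_sym: "herm v u = cnj (herm u v)"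
  by (simp add: herm_def mult.commute)
lemma herm_self: "herm u u = complex_of_real ((norm u)^2)"
proof -
  have "(norm u)^2 = (\<Sum>i\<in>UNIV. (cmod (u$i))^2)"
    by (simp add: norm_vec_def L2_set_def sum_nonneg)
  then have "complex_of_real ((norm u)^2) = (\<Sum>i\<in>UNIV. complex_of_real ((cmod (u$i))^2))" by simp
  also have "\<dots> = herm u u" unfolding herm_def complex_norm_square ..
  finally show ?thesis by simp
qed
lemma Re_herm: "Re (herm u v) = inner u v"
  by (simp add: herm_def inner_vec_def inner_complex_def Re_sum)

lemma norm_smult: "norm (c *s (u::vec3)) = cmod c * norm u"
proof -
  have "complex_of_real ((norm (c *s u))^2) = herm (c *s u) (c *s u)" by (rule herm_self[symmetric])
  also have "\<dots> = (c * cnj c) * herm u u" by (simp add: herm_smult_left herm_smult_right mult.assoc)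
  also have "\<dots> = complex_of_real ((cmod c)^2) * complex_of_real ((norm u)^2)"
    by (simp only: herm_self complex_norm_square)
  also have "\<dots> = complex_of_real ((cmod c * norm u)^2)" by (simp add: power_mult_distrib)
  finally have "(norm (c *s u))^2 = (cmod c * norm u)^2" using of_real_eq_iff by blast
  then show ?thesis by (simp add: power2_eq_iff_nonneg)
qed

lemma scaleR_smult: "r *\<^sub>R (v::vec3) = complex_of_real r *s v"
  unfolding vec_eq_iff by (auto simp: scaleR_conv_of_real[where 'a=complex])

lemma herm_phase: assumes "herm u v \<noteq> 0"
  shows "herm ((cnj (herm u v) / complex_of_real (cmod (herm u v))) *s u) v = complex_of_real (cmod (herm u v))"
proof -
  let ?h = "herm u v"
  have "herm ((cnj ?h / complex_of_real (cmod ?h)) *s u) v = cnj ?h * ?h / complex_of_real (cmod ?h)"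
    by (simp add: herm_smult_left)
  also have "\<dots> = complex_of_real ((cmod ?h)^2) / complex_of_real (cmod ?h)"
    by (simp only: complex_norm_square mult.commute)
  also have "\<dots> = complex_of_real (cmod ?h)" using assms by (simp add: power2_eq_square)
  finally show ?thesis .
qed

lemma phase_norm: "h \<noteq> 0 \<Longrightarrow> cmod (cnj h / complex_of_real (cmod h)) = 1"
  by (simp add: norm_divide)

lemma herm_cs: "cmod (herm u v) \<le> norm u * norm v"
proof (cases "herm u v = 0")
  case True then show ?thesis by simp
next
  case False
  let ?h = "herm u v"
  define l where "l = cnj ?h / complex_of_real (cmod ?h)"
  have cl: "cmod l = 1" using False phase_norm unfolding l_def by blast
  have "herm (l *s u) v = complex_of_real (cmod ?h)" using herm_phase[OF False] unfolding l_def .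
  then have "cmod ?h = inner (l *s u) v" by (metis Re_complex_of_real Re_herm)
  also have "\<dots> \<le> norm (l *s u) * norm v" by (rule norm_cauchy_schwarz)
  also have "\<dots> = norm u * norm v" by (simp add: norm_smult cl)
  finally show ?thesis .
qed

lemma herm_cs_eq: assumes "cmod (herm u v) = norm u * norm v" "v \<noteq> 0"
  shows "\<exists>c. u = c *s v"
proof (cases "herm u v = 0")
  case True
  then have "norm u = 0" using assms by simp
  then show ?thesis by (intro exI[of _ 0]) simp
next
  case False
  let ?h = "herm u v"
  define l where "l = cnj ?h / complex_of_real (cmod ?h)"
  have cl: "cmod l = 1" using False phase_norm unfolding l_def by blast
  have l0: "l \<noteq> 0" using cl by auto
  have "herm (l *s u) v = complex_of_real (cmod ?h)" using herm_phase[OF False] unfolding l_def .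
  then have "cmod ?h = inner (l *s u) v" by (metis Re_complex_of_real Re_herm)
  then have "inner (l *s u) v = norm (l *s u) * norm v" using assms by (simp add: norm_smult cl)
  then have e: "norm (l *s u) *\<^sub>R v = norm v *\<^sub>R (l *s u)" using norm_cauchy_schwarz_eq by blast
  have nv: "norm v \<noteq> 0" using assms by simp
  have "l *s u = (1/norm v) *\<^sub>R (norm v *\<^sub>R (l *s u))" using nv by simp
  also have "\<dots> = (norm u / norm v) *\<^sub>R v" unfolding e[symmetric] by (simp add: norm_smult cl)
  finally have "l *s u = complex_of_real (norm u / norm v) *s v" by (simp add: scaleR_smult)
  then have "inverse l *s (l *s u) = (inverse l * complex_of_real (norm u / norm v)) *s v"
    by (simp add: vector_smult_assoc)
  then have "u = (inverse l * complex_of_real (norm u / norm v)) *s v"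
    using l0 by (simp add: vector_smult_assoc)
  then show ?thesis by blast
qed



definition DD :: "vec3 \<Rightarrow> vec3 \<Rightarrow> real" where
  "DD u v = cmod (herm u v) / (norm u * norm v)"

lemma DD_bounds: "0 \<le> DD u v \<and> DD u v \<le> 1"
proof -
  have "cmod (herm u v) \<le> norm u * norm v" by (rule herm_cs)
  then show ?thesis unfolding DD_def
    by (cases "norm u * norm v = 0") (auto simp: divide_le_eq_1)
qed

lemma DD_b1: "-1 \<le> DD u v" using DD_bounds[of u v] by linarith
lemma DD_b2: "DD u v \<le> 1" using DD_bounds[of u v] by linarith

lemma DD_smult: "c \<noteq> 0 \<Longrightarrow> k \<noteq> 0 \<Longrightarrow> DD (c *s u) (k *s v) = DD u v"
  unfolding DD_def by (simp add: herm_smult_left herm_smult_right norm_smult norm_mult)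

lemma DD_sym: "DD u v = DD v u"
  unfolding DD_def by (simp add: herm_sym[of u v] mult.commute)

lemma fs_dist_DD: "fs_dist p q = arccos (DD (rep p) (rep q))"
  unfolding fs_dist_def DD_def ..

lemma fs_dist_proj: assumes "u \<noteq> 0" "v \<noteq> 0"
  shows "fs_dist (proj u) (proj v) = arccos (DD u v)"
proof -
  obtain c where c: "c \<noteq> 0" "rep (proj u) = c *s u" using rep_proj[OF assms(1)] by blast
  obtain k where k: "k \<noteq> 0" "rep (proj v) = k *s v" using rep_proj[OF assms(2)] by blast
  show ?thesis unfolding fs_dist_DD c k DD_smult[OF c(1) k(1)] ..
qed

lemma fs_dist_nonneg: "0 \<le> fs_dist p q"
  unfolding fs_dist_DD using DD_b1 DD_b2 by (intro arccos_lbound)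

lemma fs_dist_sym: "fs_dist p q = fs_dist q p"
  unfolding fs_dist_DD by (simp add: DD_sym)

lemma DD_self: "v \<noteq> 0 \<Longrightarrow> DD v v = 1"
  unfolding DD_def herm_self norm_of_real by (simp add: power2_eq_square)

lemma fs_dist_self[simp]: "fs_dist p p = 0"
  unfolding fs_dist_DD by (simp add: DD_self)

lemma cos_fs_dist: "cos (fs_dist p q) = DD (rep p) (rep q)"
  unfolding fs_dist_DD using DD_b1 DD_b2 by (intro cos_arccos)

lemma fs_dist_zero: assumes "fs_dist p q = 0" shows "p = q"
proof -
  have "DD (rep p) (rep q) = 1" using cos_fs_dist[of p q] assms by simp
  then have "cmod (herm (rep p) (rep q)) = norm (rep p) * norm (rep q)"
    unfolding DD_def by (simp add: divide_eq_1_iff)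
  then obtain c where c: "rep p = c *s rep q" using herm_cs_eq rep_nz by blast
  then have "c \<noteq> 0" using rep_nz[of p] by auto
  then have "proj (rep p) = proj (rep q)" using c proj_smult by simp
  then show ?thesis by simp
qed

lemma tri_core:
  assumes nu: "norm u = 1" and nv: "norm v = 1" and nw: "norm w = 1"
  shows "cmod (herm u v) * cmod (herm v w)
     - sqrt (1 - (cmod (herm u v))^2) * sqrt (1 - (cmod (herm v w))^2) \<le> cmod (herm u w)"
proof -
  define a where "a = herm u v"
  define b where "b = herm w v"
  define x where "x = u - a *s v"
  define y where "y = w - b *s v"
  have hvv: "herm v v = 1" using nv by (simp add: herm_self)
  have huu: "herm u u = 1" using nu by (simp add: herm_self)
  have hww: "herm w w = 1" using nw by (simp add: herm_self)
  have cb: "cnj b = herm v w" unfolding b_def using herm_sym[of v w] by simp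
  have ca: "cnj a = herm v u" unfolding a_def using herm_sym[of u v] by simp
  have hxy: "herm x y = herm u w - a * herm v w"
    unfolding x_def y_def herm_diff_left herm_diff_right herm_smult_left herm_smult_right
    by (simp add: cb hvv a_def algebra_simps)
  have hxx: "herm x x = complex_of_real (1 - (cmod a)^2)"
    unfolding x_def herm_diff_left herm_diff_right herm_smult_left herm_smult_right
    by (simp add: ca hvv huu a_def algebra_simps complex_norm_square[symmetric]
         herm_sym[of v u])
  have hyy: "herm y y = complex_of_real (1 - (cmod b)^2)"
    unfolding y_def herm_diff_left herm_diff_right herm_smult_left herm_smult_right
    by (simp add: cb hvv hww b_def algebra_simps complex_norm_square[symmetric]
         herm_sym[of v w])
  have "(norm x)^2 = 1 - (cmod a)^2" using hxx herm_self[of x] of_real_eq_iff by metis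
  then have nx: "norm x = sqrt (1 - (cmod a)^2)" by (metis norm_ge_zero real_sqrt_unique)
  have "(norm y)^2 = 1 - (cmod b)^2" using hyy herm_self[of y] of_real_eq_iff by metis
  then have ny: "norm y = sqrt (1 - (cmod b)^2)" by (metis norm_ge_zero real_sqrt_unique)
  have cbv: "cmod (herm v w) = cmod b" using cb by (metis complex_mod_cnj)
  have "cmod (a * herm v w) \<le> cmod (herm u w) + cmod (herm x y)"
    unfolding hxy by (metis add.commute diff_add_cancel norm_triangle_ineq4 norm_minus_commute
        add_diff_cancel_left' norm_triangle_sub)
  moreover have "cmod (herm x y) \<le> norm x * norm y" by (rule herm_cs)
  ultimately show ?thesis unfolding nx ny a_def[symmetric] cbv using norm_mult[of a "herm v w"] cbv
    by (simp add: b_def[symmetric])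
qed

lemma unit_rep: "\<exists>u. norm u = 1 \<and> proj u = p"
proof -
  let ?u = "complex_of_real (1 / norm (rep p)) *s rep p"
  have "norm ?u = 1" by (simp add: norm_smult norm_divide)
  moreover have "proj ?u = p" by (simp add: proj_smult)
  ultimately show ?thesis by blast
qed

lemma fs_dist_unit: assumes "norm u = 1" "norm v = 1"
  shows "fs_dist (proj u) (proj v) = arccos (cmod (herm u v))"
proof -
  have "u \<noteq> 0" "v \<noteq> 0" using assms by auto
  then show ?thesis using fs_dist_proj assms unfolding DD_def by simp
qed

lemma fs_dist_tri: "fs_dist p r \<le> fs_dist p q + fs_dist q r"
proof -
  obtain u where u: "norm u = 1" "proj u = p" using unit_rep by blast
  obtain v where v: "norm v = 1" "proj v = q" using unit_rep by blast
  obtain w where w: "norm w = 1" "proj w = r" using unit_rep by blast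
  define A where "A = cmod (herm u v)"
  define B where "B = cmod (herm v w)"
  define C where "C = cmod (herm u w)"
  have A: "0 \<le> A" "A \<le> 1" unfolding A_def using herm_cs[of u v] u v by auto
  have B: "0 \<le> B" "B \<le> 1" unfolding B_def using herm_cs[of v w] v w by auto
  have C: "0 \<le> C" "C \<le> 1" unfolding C_def using herm_cs[of u w] u w by auto
  have dpq: "fs_dist p q = arccos A" unfolding A_def using fs_dist_unit[of u v] u v by simp
  have dqr: "fs_dist q r = arccos B" unfolding B_def using fs_dist_unit[of v w] v w by simp
  have dpr: "fs_dist p r = arccos C" unfolding C_def using fs_dist_unit[of u w] u w by simp
  have core: "A * B - sqrt (1 - A^2) * sqrt (1 - B^2) \<le> C"
    unfolding A_def B_def C_def by (rule tri_core[OF u(1) v(1) w(1)])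
  have cs: "cos (arccos A + arccos B) = A * B - sqrt (1 - A^2) * sqrt (1 - B^2)"
    using A B by (simp add: cos_add sin_arccos)
  show ?thesis
  proof (cases "arccos A + arccos B \<le> pi")
    case True
    have m1: "-1 \<le> cos (arccos A + arccos B)" by simp
    have "cos (arccos A + arccos B) \<le> C" using core cs by simp
    from arccos_le_arccos[OF m1 this C(2)]
    have "arccos C \<le> arccos (cos (arccos A + arccos B))" .
    also have "\<dots> = arccos A + arccos B"
      using True A B arccos_lbound[of A] arccos_lbound[of B] by (intro arccos_cos) auto
    finally show ?thesis unfolding dpq dqr dpr .
  next
    case False
    then show ?thesis unfolding dpq dqr dpr using arccos_ubound[of C] C by auto
  qed
qed



lemma fs_conv_subseq: "fs_conv s p \<Longrightarrow> strict_mono r \<Longrightarrow> fs_conv (s \<circ> r) p"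
  unfolding fs_conv_def using LIMSEQ_subseq_LIMSEQ by (fastforce simp: o_def)

lemma herm_tendsto: "w \<longlonglongrightarrow> a \<Longrightarrow> (\<lambda>j. herm (w j) b) \<longlonglongrightarrow> herm a b"
  unfolding herm_def by (intro tendsto_intros tendsto_vec_nth)

lemma conv_proj:
  assumes nz: "\<And>j. w j \<noteq> 0" and lim: "w \<longlonglongrightarrow> w0" and w0: "w0 \<noteq> 0"
  shows "fs_conv (\<lambda>j. proj (w j)) (proj w0)"
proof -
  have e: "fs_dist (proj (w j)) (proj w0) = arccos (DD (w j) w0)" for j
    using fs_dist_proj[OF nz w0] .
  have "(\<lambda>j. DD (w j) w0) \<longlonglongrightarrow> DD w0 w0"
    unfolding DD_def using w0 by (intro tendsto_intros herm_tendsto lim) auto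
  then have "(\<lambda>j. DD (w j) w0) \<longlonglongrightarrow> 1" using DD_self[OF w0] by simp
  then have "(\<lambda>j. arccos (DD (w j) w0)) \<longlonglongrightarrow> arccos 1"
    by (rule continuous_on_tendsto_compose[OF continuous_on_arccos'])
       (auto simp: DD_b1 DD_b2)
  then show ?thesis unfolding fs_conv_def e by simp
qed

lemma conv_reps:
  assumes "fs_conv s p"
  shows "\<exists>w. (\<forall>j. w j \<noteq> 0) \<and> (\<forall>j. proj (w j) = s j) \<and> w \<longlonglongrightarrow> rep p"
proof -
  define u0 where "u0 = rep p"
  define N where "N = norm u0"
  have N: "N > 0" unfolding N_def u0_def by simp
  define h where "h j = herm (rep (s j)) u0" for j
  define l where "l j = (if h j = 0 then 1 else cnj (h j) / complex_of_real (cmod (h j)))" for j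
  define w where "w j = (complex_of_real (N / norm (rep (s j))) * l j) *s rep (s j)" for j
  have cl: "cmod (l j) = 1" for j unfolding l_def using phase_norm by auto
  have nw: "norm (w j) = N" for j
    unfolding w_def norm_smult norm_mult cl using N by (simp add: norm_divide)
  have wnz: "w j \<noteq> 0" for j using nw[of j] N by auto
  have pw: "proj (w j) = s j" for j
    unfolding w_def using cl[of j] N by (subst proj_smult) (auto simp: norm_mult)
  have lh: "l j * h j = complex_of_real (cmod (h j))" for j
  proof (cases "h j = 0")
    case True then show ?thesis by (simp add: l_def)
  next
    case False
    have "l j * h j = cnj (h j) * h j / complex_of_real (cmod (h j))" using False by (simp add: l_def)
    also have "\<dots> = complex_of_real ((cmod (h j))^2) / complex_of_real (cmod (h j))"
      by (simp only: complex_norm_square mult.commute)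
    also have "\<dots> = complex_of_real (cmod (h j))" using False by (simp add: power2_eq_square)
    finally show ?thesis .
  qed
  have hw: "herm (w j) u0 = complex_of_real (N * N * DD (rep (s j)) u0)" for j
  proof -
    have "herm (w j) u0 = complex_of_real (N / norm (rep (s j))) * (l j * h j)"
      unfolding w_def herm_smult_left h_def by (simp add: mult.assoc)
    also have "\<dots> = complex_of_real (N / norm (rep (s j)) * cmod (h j))" unfolding lh by simp
    also have "N / norm (rep (s j)) * cmod (h j) = N * N * DD (rep (s j)) u0"
      unfolding DD_def h_def N_def using N by (simp add: field_simps N_def)
    finally show ?thesis .
  qed
  have nd: "(norm (w j - u0))^2 = 2 * N^2 * (1 - cos (fs_dist (s j) p))" for j
  proof -
    have "complex_of_real ((norm (w j - u0))^2) = herm (w j - u0) (w j - u0)" by (simp add: herm_self)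
    also have "\<dots> = herm (w j) (w j) - herm (w j) u0 - cnj (herm (w j) u0) + herm u0 u0"
      by (simp add: herm_diff_left herm_diff_right herm_sym[of "w j" u0])
    also have "\<dots> = complex_of_real (2 * N^2 * (1 - DD (rep (s j)) u0))"
      unfolding hw herm_self nw N_def[symmetric] by (simp add: algebra_simps power2_eq_square)
    finally have "(norm (w j - u0))^2 = 2 * N^2 * (1 - DD (rep (s j)) u0)" using of_real_eq_iff by blast
    then show ?thesis unfolding cos_fs_dist u0_def .
  qed
  have "(\<lambda>j. fs_dist (s j) p) \<longlonglongrightarrow> 0" using assms unfolding fs_conv_def .
  then have "(\<lambda>j. sqrt (2 * N^2 * (1 - cos (fs_dist (s j) p)))) \<longlonglongrightarrow> sqrt (2 * N^2 * (1 - cos 0))"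
    by (intro tendsto_intros)
  moreover have "sqrt (2 * N^2 * (1 - cos (fs_dist (s j) p))) = norm (w j - u0)" for j
    using nd[of j] norm_ge_zero real_sqrt_unique by metis
  ultimately have "(\<lambda>j. norm (w j - u0)) \<longlonglongrightarrow> 0" by simp
  then have "w \<longlonglongrightarrow> u0" using tendsto_norm_zero_iff Lim_null by blast
  then show ?thesis using wnz pw u0_def by blast
qed

lemma fs_compact: fixes s :: "nat \<Rightarrow> P2" shows "\<exists>r p. strict_mono r \<and> fs_conv (s \<circ> r) p"
proof -
  define u where "u j = complex_of_real (1 / norm (rep (s j))) *s rep (s j)" for j
  have nu: "norm (u j) = 1" for j unfolding u_def norm_smult norm_of_real by simp
  have pu: "proj (u j) = s j" for j
  proof -
    have "complex_of_real (1 / norm (rep (s j))) \<noteq> 0" by simp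
    then show ?thesis unfolding u_def using proj_smult proj_rep by metis
  qed
  have "seq_compact (sphere (0::vec3) 1)" by (intro compact_imp_seq_compact compact_sphere)
  moreover have mem: "\<forall>n. u n \<in> sphere 0 1" using nu by (simp only: mem_sphere_0) blast
  ultimately obtain l r where l: "l \<in> sphere 0 1" "strict_mono r" "(u \<circ> r) \<longlonglongrightarrow> l" by (rule seq_compactE)
  have unz: "(u \<circ> r) j \<noteq> 0" for j using nu[of "r j"] by (metis o_apply norm_zero zero_neq_one)
  have lnz: "l \<noteq> 0" using l(1) by (metis mem_sphere_0 norm_zero zero_neq_one)
  have "fs_conv (\<lambda>j. proj ((u \<circ> r) j)) (proj l)"
    by (rule conv_proj[OF unz l(3) lnz])
  moreover have "(\<lambda>j. proj ((u \<circ> r) j)) = s \<circ> r" by (rule ext) (simp only: o_def pu)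
  ultimately have "fs_conv (s \<circ> r) (proj l)" by simp
  then show ?thesis using l by blast
qed

lemma fs_conv_inv: "(\<And>n. fs_dist (s n) p < inverse (real (Suc n))) \<Longrightarrow> fs_conv s p"
  unfolding fs_conv_def
  by (rule real_tendsto_sandwich[OF _ _ tendsto_const LIMSEQ_inverse_real_of_nat])
     (auto simp: fs_dist_nonneg less_imp_le)



definition mono3 :: "nat \<times> nat \<times> nat \<Rightarrow> vec3 \<Rightarrow> complex" where
  "mono3 m x = x$1 ^ fst m * x$2 ^ fst (snd m) * x$3 ^ snd (snd m)"

definition Sd :: "nat \<Rightarrow> (nat \<times> nat \<times> nat) set" where
  "Sd d = {m. fst m + fst (snd m) + snd (snd m) = d}"

definition polyrep :: "nat \<Rightarrow> (3 \<Rightarrow> nat \<times> nat \<times> nat \<Rightarrow> complex) \<Rightarrow> (vec3 \<Rightarrow> vec3) \<Rightarrow> bool" where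
  "polyrep d C F \<longleftrightarrow> (\<forall>i x. F x $ i = (\<Sum>m\<in>Sd d. C i m * mono3 m x))"

lemma finite_Sd: "finite (Sd d)"
proof -
  have "Sd d \<subseteq> {..d} \<times> {..d} \<times> {..d}" unfolding Sd_def by auto
  then show ?thesis by (rule finite_subset) auto
qed

lemma rat_polyrep: assumes "rat_map F" shows "\<exists>d C. polyrep d C F"
proof -
  obtain d where d: "\<forall>i. hpoly d (\<lambda>x. F x $ i)" using assms unfolding rat_map_def by blast
  then have "\<forall>i. \<exists>c. \<forall>x. F x $ i = (\<Sum>m\<in>Sd d. c m * mono3 m x)"
    unfolding hpoly_def Sd_def mono3_def mult.assoc by blast
  then obtain C where "\<forall>i. \<forall>x. F x $ i = (\<Sum>m\<in>Sd d. C i m * mono3 m x)" by metis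
  then show ?thesis unfolding polyrep_def by blast
qed

lemma mono3_smult: "mono3 m (c *s x) = c ^ (fst m + fst (snd m) + snd (snd m)) * mono3 m x"
  unfolding mono3_def by (simp add: power_add power_mult_distrib)

lemma F_homog: assumes "polyrep d C F" shows "F (c *s x) = c ^ d *s F x"
proof -
  have "F (c *s x) $ i = (c ^ d *s F x) $ i" for i
  proof -
    have "F (c *s x) $ i = (\<Sum>m\<in>Sd d. C i m * (c^d * mono3 m x))"
      using assms unfolding polyrep_def by (simp add: mono3_smult Sd_def)
    also have "\<dots> = c^d * (\<Sum>m\<in>Sd d. C i m * mono3 m x)"
      by (simp add: sum_distrib_left algebra_simps)
    also have "\<dots> = (c ^ d *s F x) $ i" using assms unfolding polyrep_def by simp
    finally show ?thesis .
  qed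
  then show ?thesis by (simp add: vec_eq_iff)
qed

lemma mono3_tendsto: "w \<longlonglongrightarrow> a \<Longrightarrow> (\<lambda>j. mono3 m (w j)) \<longlonglongrightarrow> mono3 m a"
  unfolding mono3_def by (intro tendsto_intros tendsto_vec_nth)

lemma F_tendsto: assumes "polyrep d C F" "w \<longlonglongrightarrow> a" shows "(\<lambda>j. F (w j)) \<longlonglongrightarrow> F a"
proof (rule vec_tendstoI)
  fix i
  have e: "(\<lambda>j. F (w j) $ i) = (\<lambda>j. \<Sum>m\<in>Sd d. C i m * mono3 m (w j))"
    using assms(1) unfolding polyrep_def by simp
  have "(\<lambda>j. \<Sum>m\<in>Sd d. C i m * mono3 m (w j)) \<longlonglongrightarrow> (\<Sum>m\<in>Sd d. C i m * mono3 m a)"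
    by (intro tendsto_intros mono3_tendsto assms(2))
  then show "(\<lambda>j. F (w j) $ i) \<longlonglongrightarrow> F a $ i" unfolding e using assms(1) unfolding polyrep_def by simp
qed

lemma pow_deriv: "((\<lambda>t. (x + t * e) ^ n) has_field_derivative of_nat n * (e * x ^ (n - Suc 0))) (at (0::complex))"
proof -
  have "((\<lambda>t. x + t * e) has_field_derivative e) (at 0)" by (auto intro!: derivative_eq_intros)
  from DERIV_power[OF this, of n] show ?thesis by simp
qed

definition dmono3 :: "3 \<Rightarrow> nat \<times> nat \<times> nat \<Rightarrow> vec3 \<Rightarrow> complex" where
  "dmono3 j m v =
    (of_nat (fst m) * (axis j 1 $ 1 * v$1 ^ (fst m - Suc 0)) * v$2 ^ fst (snd m)
      + of_nat (fst (snd m)) * (axis j 1 $ 2 * v$2 ^ (fst (snd m) - Suc 0)) * v$1 ^ fst m) * v$3 ^ snd (snd m)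
    + of_nat (snd (snd m)) * (axis j 1 $ 3 * v$3 ^ (snd (snd m) - Suc 0)) * (v$1 ^ fst m * v$2 ^ fst (snd m))"

lemma dmono3_deriv: "((\<lambda>t. mono3 m (v + t *s axis j 1)) has_field_derivative dmono3 j m v) (at 0)"
proof -
  have e: "(\<lambda>t. mono3 m (v + t *s axis j 1)) = (\<lambda>t. (v$1 + t * axis j 1 $ 1) ^ fst m
     * (v$2 + t * axis j 1 $ 2) ^ fst (snd m) * (v$3 + t * axis j 1 $ 3) ^ snd (snd m))"
    unfolding mono3_def by simp
  show ?thesis unfolding e dmono3_def
    by (rule DERIV_cong[OF DERIV_mult[OF DERIV_mult[OF pow_deriv pow_deriv] pow_deriv]]) simp
qed

lemma dmono3_tendsto: "w \<longlonglongrightarrow> a \<Longrightarrow> (\<lambda>k. dmono3 j m (w k)) \<longlonglongrightarrow> dmono3 j m a"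
  unfolding dmono3_def by (intro tendsto_intros tendsto_vec_nth)

definition PD :: "nat \<Rightarrow> (3 \<Rightarrow> nat \<times> nat \<times> nat \<Rightarrow> complex) \<Rightarrow> 3 \<Rightarrow> 3 \<Rightarrow> vec3 \<Rightarrow> complex" where
  "PD d C i j v = (\<Sum>m\<in>Sd d. C i m * dmono3 j m v)"

lemma PD_deriv: assumes "polyrep d C F"
  shows "((\<lambda>t. F (v + t *s axis j 1) $ i) has_field_derivative PD d C i j v) (at 0)"
proof -
  have e: "(\<lambda>t. F (v + t *s axis j 1) $ i) = (\<lambda>t. \<Sum>m\<in>Sd d. C i m * mono3 m (v + t *s axis j 1))"
    using assms unfolding polyrep_def by simp
  show ?thesis unfolding e PD_def
    by (intro DERIV_sum DERIV_cmult dmono3_deriv)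
qed

lemma PD_tendsto: "w \<longlonglongrightarrow> a \<Longrightarrow> (\<lambda>k. PD d C i j (w k)) \<longlonglongrightarrow> PD d C i j a"
  unfolding PD_def by (intro tendsto_intros dmono3_tendsto)

definition PDM :: "nat \<Rightarrow> (3 \<Rightarrow> nat \<times> nat \<times> nat \<Rightarrow> complex) \<Rightarrow> vec3 \<Rightarrow> complex^3^3" where
  "PDM d C v = (\<chi> i j. PD d C i j v)"

lemma jac_PDM: assumes "polyrep d C F" shows "jac F v = det (PDM d C v)"
  unfolding jac_def PDM_def using DERIV_imp_deriv[OF PD_deriv[OF assms]] by simp

lemma jac_comp: assumes "polyrep d C F" shows "jac (compT M F) v = det M * jac F v"
proof -
  have hd: "((\<lambda>t. compT M F (v + t *s axis j 1) $ i) has_field_derivative (\<Sum>k\<in>UNIV. M$i$k * PD d C k j v)) (at 0)" for i j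
  proof -
    have e: "(\<lambda>t. compT M F (v + t *s axis j 1) $ i) = (\<lambda>t. \<Sum>k\<in>UNIV. M$i$k * F (v + t *s axis j 1) $ k)"
      unfolding compT_def matrix_vector_mult_def by simp
    show ?thesis unfolding e by (intro DERIV_sum DERIV_cmult PD_deriv[OF assms])
  qed
  have "jac (compT M F) v = det (\<chi> i j. \<Sum>k\<in>UNIV. M$i$k * PD d C k j v)"
    unfolding jac_def using DERIV_imp_deriv[OF hd] by simp
  also have "(\<chi> i j. \<Sum>k\<in>UNIV. M$i$k * PD d C k j v) = M ** PDM d C v"
    unfolding matrix_matrix_mult_def PDM_def by simp
  finally show ?thesis using det_mul jac_PDM[OF assms] by simp
qed

lemma det_tendsto: assumes "\<And>i j. (\<lambda>k. X k $ i $ j) \<longlonglongrightarrow> (A::complex^3^3) $ i $ j"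
  shows "(\<lambda>k. det (X k)) \<longlonglongrightarrow> det A"
  unfolding det_3 by (intro tendsto_intros assms)

lemma jac_tendsto: assumes "polyrep d C F" "w \<longlonglongrightarrow> a" shows "(\<lambda>k. jac F (w k)) \<longlonglongrightarrow> jac F a"
  unfolding jac_PDM[OF assms(1)] by (intro det_tendsto) (simp add: PDM_def PD_tendsto assms(2))

lemma PD_smult: assumes "polyrep d C F" "c \<noteq> 0"
  shows "PD d C i j (c *s v) = (c ^ d / c) * PD d C i j v"
proof -
  have e: "(\<lambda>t. F (c *s v + t *s axis j 1) $ i) = (\<lambda>t. c ^ d * F (v + (t / c) *s axis j 1) $ i)"
  proof
    fix t
    have "c *s v + t *s axis j 1 = c *s (v + (t / c) *s axis j 1)"
      using assms(2) by (simp add: vector_add_ldistrib vector_smult_assoc)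
    then have "F (c *s v + t *s axis j 1) $ i = F (c *s (v + (t / c) *s axis j 1)) $ i" by simp
    also have "\<dots> = c ^ d * F (v + (t / c) *s axis j 1) $ i"
      unfolding F_homog[OF assms(1)] by simp
    finally show "F (c *s v + t *s axis j 1) $ i = c ^ d * F (v + (t / c) *s axis j 1) $ i" .
  qed
  have d1: "((\<lambda>t. t / c) has_field_derivative 1 / c) (at 0)" using assms(2) by (auto intro!: derivative_eq_intros)
  have d2: "((\<lambda>t. F (v + t *s axis j 1) $ i) has_field_derivative PD d C i j v) (at (0 / c))"
    using PD_deriv[OF assms(1)] by simp
  have "((\<lambda>t. c ^ d * F (v + (t / c) *s axis j 1) $ i) has_field_derivative c ^ d * (PD d C i j v * (1 / c))) (at 0)"
    by (intro DERIV_cmult DERIV_chain2[OF d2 d1])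
  then have "((\<lambda>t. F (c *s v + t *s axis j 1) $ i) has_field_derivative c ^ d * (PD d C i j v * (1 / c))) (at 0)"
    unfolding e .
  from DERIV_unique[OF PD_deriv[OF assms(1)] this] show ?thesis by simp
qed

lemma jac_smult: assumes "polyrep d C F" "c \<noteq> 0"
  shows "jac F (c *s v) = (c ^ d / c) ^ 3 * jac F v"
proof -
  have "PDM d C (c *s v) = (\<chi> i. (c ^ d / c) *s (\<chi> j. PD d C i j v))"
    unfolding PDM_def PD_smult[OF assms] by (simp add: vec_eq_iff)
  moreover have "det (\<chi> i. (c ^ d / c) *s (\<chi> j. PD d C i j v)) = (\<Prod>i\<in>(UNIV::3 set). c ^ d / c) * det (\<chi> i. (\<chi> j. PD d C i j v))"
    by (rule det_rows_mul)
  ultimately have "det (PDM d C (c *s v)) = (\<Prod>i\<in>(UNIV::3 set). c ^ d / c) * det (\<chi> i. (\<chi> j. PD d C i j v))"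
    by simp
  then show ?thesis unfolding jac_PDM[OF assms(1)] PDM_def by simp
qed

lemma jac_cone: assumes "polyrep d C F" "c \<noteq> 0" shows "jac F (c *s v) = 0 \<longleftrightarrow> jac F v = 0"
  using jac_smult[OF assms] assms(2) by simp



lemma indet_iff: assumes "polyrep d C F" shows "p \<in> indet F \<longleftrightarrow> F (rep p) = 0"
proof
  assume "p \<in> indet F"
  then obtain v where v: "p = proj v" "v \<noteq> 0" "F v = 0" unfolding indet_def by blast
  obtain c where c: "c \<noteq> 0" "v = c *s rep p" using rep_of_proj[OF v(2) v(1)[symmetric]] by blast
  have "c ^ d *s F (rep p) = 0" using v(3) c(2) F_homog[OF assms] by simp
  then show "F (rep p) = 0" using c(1) by simp
next
  assume "F (rep p) = 0"
  then show "p \<in> indet F" unfolding indet_def by (intro CollectI exI[of _ "rep p"]) simp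
qed

lemma fmap_w: assumes "polyrep d C F" "w \<noteq> 0" "proj w = p" shows "fmap F p = proj (F w)"
proof -
  obtain c where c: "c \<noteq> 0" "w = c *s rep p" using rep_of_proj[OF assms(2,3)] by blast
  have "F w = c ^ d *s F (rep p)" using c(2) F_homog[OF assms(1)] by simp
  then show ?thesis unfolding fmap_def using proj_smult c(1) by simp
qed

lemma Fw_zero: assumes "polyrep d C F" "w \<noteq> 0" "proj w = p" shows "F w = 0 \<longleftrightarrow> F (rep p) = 0"
proof -
  obtain c where c: "c \<noteq> 0" "w = c *s rep p" using rep_of_proj[OF assms(2,3)] by blast
  have "F w = c ^ d *s F (rep p)" using c(2) F_homog[OF assms(1)] by simp
  then show ?thesis using c(1) by simp
qed

lemma fmap_cont:
  assumes pr: "polyrep d C F" and sI: "\<And>j. s j \<notin> indet F" and conv: "fs_conv s p" and pI: "p \<notin> indet F"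
  shows "fs_conv (\<lambda>j. fmap F (s j)) (fmap F p)"
proof -
  obtain w where w: "\<forall>j. w j \<noteq> 0" "\<forall>j. proj (w j) = s j" "w \<longlonglongrightarrow> rep p"
    using conv_reps[OF conv] by blast
  have e: "fmap F (s j) = proj (F (w j))" for j using fmap_w[OF pr] w by blast
  have nz: "F (w j) \<noteq> 0" for j using Fw_zero[OF pr] w sI indet_iff[OF pr] by blast
  have nz0: "F (rep p) \<noteq> 0" using pI indet_iff[OF pr] by blast
  have "fs_conv (\<lambda>j. proj (F (w j))) (proj (F (rep p)))"
    by (rule conv_proj[OF nz F_tendsto[OF pr w(3)] nz0])
  then show ?thesis by (simp only: e fmap_def[of F p])
qed

lemma indet_closed:
  assumes pr: "polyrep d C F" and sI: "\<And>j. s j \<in> indet F" and conv: "fs_conv s p"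
  shows "p \<in> indet F"
proof -
  obtain w where w: "\<forall>j. w j \<noteq> 0" "\<forall>j. proj (w j) = s j" "w \<longlonglongrightarrow> rep p"
    using conv_reps[OF conv] by blast
  have z: "F (w j) = 0" for j using Fw_zero[OF pr] w sI indet_iff[OF pr] by blast
  have "(\<lambda>j. F (w j)) \<longlonglongrightarrow> F (rep p)" by (rule F_tendsto[OF pr w(3)])
  then have "F (rep p) = 0" unfolding z using LIMSEQ_unique tendsto_const by blast
  then show ?thesis using indet_iff[OF pr] by blast
qed

lemma indet_closed':
  assumes pr: "polyrep d C F" and near: "\<And>r. r > 0 \<Longrightarrow> \<exists>q\<in>indet F. fs_dist q p < r"
  shows "p \<in> indet F"
proof -
  have "\<forall>n. \<exists>q. q \<in> indet F \<and> fs_dist q p < inverse (real (Suc n))"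
    using near by (metis inverse_positive_iff_positive of_nat_0_less_iff zero_less_Suc)
  then obtain q where q: "\<And>n. q n \<in> indet F" "\<And>n. fs_dist (q n) p < inverse (real (Suc n))" by metis
  show ?thesis by (rule indet_closed[OF pr q(1) fs_conv_inv[OF q(2)]])
qed

lemma invertible_Mv: assumes "invertible M" shows "M *v x = 0 \<longleftrightarrow> x = 0"
proof
  assume "M *v x = 0"
  obtain N where "N ** M = mat 1" using assms unfolding invertible_def by blast
  then have "N *v (M *v x) = x" by (simp add: matrix_vector_mul_assoc)
  then show "x = 0" using \<open>M *v x = 0\<close> by simp
qed simp

lemma indet_comp: assumes "invertible M" shows "indet (compT M F) = indet F"
  unfolding indet_def compT_def using invertible_Mv[OF assms] by simp

lemma smult_Mv: "M *v (c *s x) = (c::complex) *s (M *v x)"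
  by (simp add: vec_eq_iff matrix_vector_mult_def sum_distrib_left algebra_simps)

lemma fmap_comp: assumes "F (rep p) \<noteq> 0" shows "fmap (compT M F) p = autP M (fmap F p)"
proof -
  obtain c where c: "c \<noteq> 0" "rep (proj (F (rep p))) = c *s F (rep p)" using rep_proj[OF assms] by blast
  show ?thesis unfolding autP_def fmap_def compT_def c(2) smult_Mv using proj_smult c(1) by simp
qed

lemma fs_ball_mem: "x \<in> X \<Longrightarrow> r > 0 \<Longrightarrow> x \<in> fs_ball X r"
  unfolding fs_ball_def by force

lemma fs_ball_pt: assumes "p \<in> fs_ball X r" shows "\<exists>\<rho>>0. \<forall>q. fs_dist q p < \<rho> \<longrightarrow> q \<in> fs_ball X r"
proof -
  obtain x where x: "x \<in> X" "fs_dist p x < r" using assms unfolding fs_ball_def by blast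
  have "\<forall>q. fs_dist q p < r - fs_dist p x \<longrightarrow> q \<in> fs_ball X r"
  proof (intro allI impI)
    fix q assume "fs_dist q p < r - fs_dist p x"
    then have "fs_dist q x < r" using fs_dist_tri[of q x p] by linarith
    then show "q \<in> fs_ball X r" using x unfolding fs_ball_def by blast
  qed
  then show ?thesis using x by (intro exI[of _ "r - fs_dist p x"]) auto
qed

lemma fs_ball_open: "fs_open (fs_ball X r)"
  unfolding fs_open_def using fs_ball_pt by blast

lemma fs_conv_ev: assumes "fs_conv s p" "r > 0" shows "\<exists>N. \<forall>n\<ge>N. fs_dist (s n) p < r"
proof -
  have "(\<lambda>n. fs_dist (s n) p) \<longlonglongrightarrow> 0" using assms(1) unfolding fs_conv_def .
  from LIMSEQ_D[OF this assms(2)] show ?thesis by (simp add: abs_of_nonneg fs_dist_nonneg)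
qed

lemma fs_ball_conv: assumes "p \<in> fs_ball X r" "fs_conv s p" shows "\<exists>N. \<forall>n\<ge>N. s n \<in> fs_ball X r"
proof -
  obtain \<rho> where "\<rho> > 0" "\<forall>q. fs_dist q p < \<rho> \<longrightarrow> q \<in> fs_ball X r" using fs_ball_pt[OF assms(1)] by blast
  then show ?thesis using fs_conv_ev[OF assms(2)] by blast
qed



lemma prob_fin: "prob_space \<mu> \<Longrightarrow> emeasure \<mu> A \<noteq> \<top>"
  by (metis finite_measure.emeasure_finite prob_space_def)
lemma prob_fin': "prob_space \<mu> \<Longrightarrow> emeasure \<mu> A \<noteq> \<infinity>"
  using prob_fin by (simp add: infinity_ennreal_def)

lemma open_borel: "fs_open U \<Longrightarrow> U \<in> sets fs_borel"
  unfolding fs_borel_def by (subst sets_measure_of) auto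

lemma erg_part:
  assumes erg: "erg_inv G \<mu>"
    and oU: "fs_open U" and oV: "fs_open V"
    and UI: "U \<inter> indet G = {}" and UV: "U \<inter> V = {}"
    and fwd: "\<And>p. p \<notin> V \<Longrightarrow> p \<notin> indet G \<Longrightarrow> fmap G p \<in> U"
  shows "emeasure \<mu> U = 1 \<or> emeasure \<mu> V = 1"
proof -
  define P where "P = {p. p \<notin> indet G \<and> fmap G p \<in> U}"
  have ps: "prob_space \<mu>" and se: "sets \<mu> = sets fs_borel" and IS: "indet G \<in> sets \<mu>"
    and I0: "emeasure \<mu> (indet G) = 0"
    and inv: "\<And>A. A \<in> sets \<mu> \<Longrightarrow> {p. p \<notin> indet G \<and> fmap G p \<in> A} \<in> sets \<mu> \<and>
        emeasure \<mu> {p. p \<notin> indet G \<and> fmap G p \<in> A} = emeasure \<mu> A"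
    and ergo: "\<And>A. A \<in> sets \<mu> \<Longrightarrow>
        emeasure \<mu> (({p. p \<notin> indet G \<and> fmap G p \<in> A} - A) \<union> (A - {p. p \<notin> indet G \<and> fmap G p \<in> A})) = 0
        \<Longrightarrow> emeasure \<mu> A = 0 \<or> emeasure \<mu> A = 1"
    using erg unfolding erg_inv_def by blast+
  have US: "U \<in> sets \<mu>" using open_borel[OF oU] se by simp
  have VS: "V \<in> sets \<mu>" using open_borel[OF oV] se by simp
  have PS: "P \<in> sets \<mu>" and PU: "emeasure \<mu> P = emeasure \<mu> U" using inv[OF US] unfolding P_def by blast+
  have UP: "U \<subseteq> P" unfolding P_def using UI UV fwd by blast
  have "emeasure \<mu> (P - U) = emeasure \<mu> P - emeasure \<mu> U"
    by (rule emeasure_Diff[OF prob_fin'[OF ps] PS US UP])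
  also have "\<dots> = 0" unfolding PU by (rule ennreal_diff_self[OF prob_fin[OF ps]])
  finally have m0: "emeasure \<mu> (P - U) = 0" .
  have "(P - U) \<union> (U - P) = P - U" using UP by blast
  then have "emeasure \<mu> ((P - U) \<union> (U - P)) = 0" using m0 by simp
  then have "emeasure \<mu> U = 0 \<or> emeasure \<mu> U = 1" using ergo[OF US] unfolding P_def by simp
  then show ?thesis
  proof
    assume U0: "emeasure \<mu> U = 0"
    have sp: "space \<mu> = UNIV" using sets_eq_imp_space_eq[OF se] unfolding fs_borel_def space_measure_of_conv .
    have "UNIV - V \<subseteq> P \<union> indet G" unfolding P_def using fwd by blast
    then have "emeasure \<mu> (UNIV - V) \<le> emeasure \<mu> (P \<union> indet G)"
      by (intro emeasure_mono) (auto intro: PS IS)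
    also have "\<dots> \<le> emeasure \<mu> P + emeasure \<mu> (indet G)" by (rule emeasure_subadditive[OF PS IS])
    also have "\<dots> = 0" using PU U0 I0 by simp
    finally have c0: "emeasure \<mu> (UNIV - V) = 0" by simp
    have "1 = emeasure \<mu> (space \<mu>)" using prob_space.emeasure_space_1[OF ps] by simp
    also have "\<dots> = emeasure \<mu> (V \<union> (UNIV - V))" using sp by simp
    also have "\<dots> \<le> emeasure \<mu> V + emeasure \<mu> (UNIV - V)"
      by (rule emeasure_subadditive[OF VS]) (metis Diff_UNIV sets.compl_sets sp VS)
    also have "\<dots> = emeasure \<mu> V" using c0 by simp
    finally have "1 \<le> emeasure \<mu> V" .
    moreover have "emeasure \<mu> V \<le> emeasure \<mu> (space \<mu>)" using sets.sets_into_space[OF VS] sets.top[of \<mu>] by (intro emeasure_mono) auto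
    ultimately have "emeasure \<mu> V = 1" using prob_space.emeasure_space_1[OF ps] by simp
    then show ?thesis by simp
  qed simp
qed

lemma eventually_inv: assumes "r > 0" shows "\<exists>N. \<forall>n\<ge>N. inverse (real (Suc n)) < r"
proof -
  obtain N where N: "inverse (real (Suc N)) < r" using reals_Archimedean[OF assms] by auto
  have "inverse (real (Suc n)) \<le> inverse (real (Suc N))" if "n \<ge> N" for n
    using that by (simp add: le_imp_inverse_le)
  then show ?thesis using N by (meson order.strict_trans1)
qed

lemma eta_claim:
  assumes pr: "polyrep d C F" and nA: "p0 \<notin> img_indet F" and e: "\<epsilon> > 0"
  shows "\<exists>\<eta>>0. \<forall>s. s \<notin> indet F \<and> fs_dist (fmap F s) p0 < \<eta> \<longrightarrow>
          s \<in> fs_ball (preim F p0) \<epsilon> \<and> (\<forall>p\<in>indet F. \<eta> \<le> fs_dist s p)"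
proof (rule ccontr)
  let ?V = "fs_ball (preim F p0) \<epsilon>"
  assume "\<not> ?thesis"
  then have "\<forall>n. \<exists>s. s \<notin> indet F \<and> fs_dist (fmap F s) p0 < inverse (real (Suc n)) \<and>
     (s \<notin> ?V \<or> (\<exists>p\<in>indet F. fs_dist s p < inverse (real (Suc n))))"
    by (metis inverse_positive_iff_positive of_nat_0_less_iff zero_less_Suc not_le)
  then obtain sq where sq: "\<And>n. sq n \<notin> indet F" "\<And>n. fs_dist (fmap F (sq n)) p0 < inverse (real (Suc n))"
     "\<And>n. sq n \<notin> ?V \<or> (\<exists>p\<in>indet F. fs_dist (sq n) p < inverse (real (Suc n)))" by metis
  obtain r s0 where r: "strict_mono r" "fs_conv (sq \<circ> r) s0" using fs_compact[of sq] by blast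
  have invle: "inverse (real (Suc (r n))) \<le> inverse (real (Suc n))" for n
    using seq_suble[OF r(1), of n] by (simp add: le_imp_inverse_le)
  have fc: "fs_conv (\<lambda>n. fmap F (sq (r n))) p0"
    by (rule fs_conv_inv) (meson sq(2) invle order.strict_trans2)
  show False
  proof (cases "s0 \<in> indet F")
    case True
    have "p0 \<in> limset F s0" unfolding limset_def
      using sq(1) r(2) fc by (intro CollectI exI[of _ "sq \<circ> r"]) (auto simp: o_def)
    then have "p0 \<in> img_indet F" unfolding img_indet_def using True by blast
    then show False using nA by simp
  next
    case False
    have fc2: "fs_conv (\<lambda>n. fmap F (sq (r n))) (fmap F s0)"
      using fmap_cont[OF pr _ r(2) False] sq(1) by (simp add: o_def)
    have "(\<lambda>n. fs_dist (fmap F (sq (r n))) (fmap F s0) + fs_dist (fmap F (sq (r n))) p0) \<longlonglongrightarrow> 0 + 0"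
      using fc fc2 unfolding fs_conv_def by (intro tendsto_add)
    moreover have "\<forall>n. fs_dist (fmap F s0) p0 \<le> fs_dist (fmap F (sq (r n))) (fmap F s0) + fs_dist (fmap F (sq (r n))) p0"
      using fs_dist_tri fs_dist_sym by metis
    ultimately have "fs_dist (fmap F s0) p0 \<le> 0" by (intro LIMSEQ_le_const) auto
    then have "fmap F s0 = p0" using fs_dist_nonneg fs_dist_zero by (metis order.antisym)
    then have "s0 \<in> preim F p0" using False unfolding preim_def by simp
    then have s0V: "s0 \<in> ?V" using fs_ball_mem e by blast
    have "s0 \<in> indet F"
    proof (rule indet_closed'[OF pr])
      fix \<rho> :: real assume rho: "\<rho> > 0"
      obtain N1 where N1: "\<forall>n\<ge>N1. (sq \<circ> r) n \<in> ?V" using fs_ball_conv[OF s0V r(2)] by blast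
      obtain N2 where N2: "\<forall>n\<ge>N2. fs_dist ((sq \<circ> r) n) s0 < \<rho>/2" using fs_conv_ev[OF r(2) half_gt_zero[OF rho]] by blast
      obtain N3 where N3: "\<forall>n\<ge>N3. inverse (real (Suc n)) < \<rho>/2" using eventually_inv[OF half_gt_zero[OF rho]] by blast
      define n where "n = max N1 (max N2 N3)"
      have a1: "sq (r n) \<in> ?V" using N1 n_def by simp
      have a2: "fs_dist (sq (r n)) s0 < \<rho>/2" using N2 n_def by simp
      have a3: "inverse (real (Suc (r n))) < \<rho>/2" using N3 n_def invle[of n] by force
      obtain p where p: "p \<in> indet F" "fs_dist (sq (r n)) p < inverse (real (Suc (r n)))"
        using sq(3)[of "r n"] a1 by blast
      have "fs_dist p s0 < \<rho>" using fs_dist_tri[of p s0 "sq (r n)"] fs_dist_sym[of p "sq (r n)"] a2 a3 p(2)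
        by linarith
      then show "\<exists>q\<in>indet F. fs_dist q s0 < \<rho>" using p(1) by blast
    qed
    then show False using False by simp
  qed
qed



lemma L0mem: assumes A_img: "range (\<lambda>w. A *v w) = {w. (\<Sum>i\<in>UNIV. a $ i * w $ i) = 0}"
  and nz: "A *v w \<noteq> 0" shows "proj (A *v w) \<in> pline a"
proof -
  obtain c where c: "rep (proj (A *v w)) = c *s (A *v w)" using rep_proj[OF nz] by blast
  have s0: "(\<Sum>i\<in>UNIV. a $ i * (A *v w) $ i) = 0" using A_img by blast
  have "(\<Sum>i\<in>UNIV. a $ i * rep (proj (A *v w)) $ i) = c * (\<Sum>i\<in>UNIV. a $ i * (A *v w) $ i)"
    unfolding c by (simp add: sum_distrib_left algebra_simps)
  then show ?thesis unfolding pline_def using s0 by simp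
qed

lemma Anz: assumes A_ker: "\<forall>w. A *v w = 0 \<longleftrightarrow> (\<exists>c. w = c *s v0)" and q: "q \<noteq> proj v0"
  shows "A *v rep q \<noteq> 0"
proof
  assume "A *v rep q = 0"
  then obtain c where c: "rep q = c *s v0" using A_ker by blast
  then have "c \<noteq> 0" using rep_nz[of q] by auto
  then have "proj (rep q) = proj v0" unfolding c by (rule proj_smult)
  then show False using q by simp
qed

lemma part1:
  assumes pr: "polyrep d C F" and nA: "proj v0 \<notin> img_indet F"
    and A_ker: "\<forall>w. A *v w = 0 \<longleftrightarrow> (\<exists>c. w = c *s v0)"
    and A_img: "range (\<lambda>w. A *v w) = {w. (\<Sum>i\<in>UNIV. a $ i * w $ i) = 0}"
    and e: "\<epsilon> > 0"
    and dj1: "fs_ball (pline a) \<epsilon> \<inter> fs_ball (preim F (proj v0)) \<epsilon> = {}"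
    and dj2: "fs_ball (pline a) \<epsilon> \<inter> indet F = {}"
    and dj3: "fs_ball (preim F (proj v0)) \<epsilon> \<inter> indet F = {}"
  shows "\<exists>\<delta>>0. \<forall>M\<in>Tset A v0 \<delta>.
         (\<forall>p. p \<notin> fs_ball (preim F (proj v0)) \<epsilon> \<and> p \<notin> indet F \<longrightarrow>
              fmap (compT M F) p \<in> fs_ball (pline a) \<epsilon>) \<and>
         (\<forall>p. p \<notin> indet (compT M F) \<and> fmap (compT M F) p \<notin> fs_ball (pline a) \<epsilon> \<longrightarrow>
              p \<in> fs_ball (preim F (proj v0)) \<epsilon>) \<and>
         img_indet (compT M F) \<subseteq> fs_ball (pline a) \<epsilon> \<and>
         (\<forall>\<mu>. erg_inv (compT M F) \<mu> \<longrightarrow>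
              emeasure \<mu> (fs_ball (pline a) \<epsilon>) = 1 \<or>
              emeasure \<mu> (fs_ball (preim F (proj v0)) \<epsilon>) = 1)"
proof -
  let ?p0 = "proj v0"
  let ?U = "fs_ball (pline a) \<epsilon>"
  let ?V = "fs_ball (preim F ?p0) \<epsilon>"
  obtain \<eta> where eta: "\<eta> > 0" "\<And>s. s \<notin> indet F \<Longrightarrow> fs_dist (fmap F s) ?p0 < \<eta> \<Longrightarrow>
          s \<in> ?V \<and> (\<forall>p\<in>indet F. \<eta> \<le> fs_dist s p)"
    using eta_claim[OF pr nA e] by blast
  define \<delta> where "\<delta> = min \<eta> (\<epsilon>/2)"
  have dpos: "\<delta> > 0" unfolding \<delta>_def using eta e by simp
  have dle: "\<delta> \<le> \<eta>" "\<delta> \<le> \<epsilon>/2" unfolding \<delta>_def by auto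
  have main: "(\<forall>p. p \<notin> ?V \<and> p \<notin> indet F \<longrightarrow> fmap (compT M F) p \<in> ?U) \<and>
         (\<forall>p. p \<notin> indet (compT M F) \<and> fmap (compT M F) p \<notin> ?U \<longrightarrow> p \<in> ?V) \<and>
         img_indet (compT M F) \<subseteq> ?U \<and>
         (\<forall>\<mu>. erg_inv (compT M F) \<mu> \<longrightarrow> emeasure \<mu> ?U = 1 \<or> emeasure \<mu> ?V = 1)"
    if M: "M \<in> Tset A v0 \<delta>" for M
  proof -
    have inv: "invertible M" and TM: "\<And>p. \<delta> \<le> fs_dist p ?p0 \<Longrightarrow> fs_dist (autP M p) (proj (A *v rep p)) < \<delta>"
      using M unfolding Tset_def by blast+
    have IC: "indet (compT M F) = indet F" by (rule indet_comp[OF inv])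
    have K: "\<exists>x\<in>pline a. fs_dist (fmap (compT M F) s) x < \<delta>"
      if s: "s \<notin> indet F" "\<delta> \<le> fs_dist (fmap F s) ?p0" for s
    proof -
      have "fmap F s \<noteq> ?p0" using s(2) dpos by auto
      then have nz: "A *v rep (fmap F s) \<noteq> 0" by (rule Anz[OF A_ker])
      have "F (rep s) \<noteq> 0" using s(1) indet_iff[OF pr] by blast
      then have "fmap (compT M F) s = autP M (fmap F s)" by (rule fmap_comp)
      then show ?thesis using TM[OF s(2)] L0mem[OF A_img nz] by auto
    qed
    have i: "fmap (compT M F) p \<in> ?U" if p: "p \<notin> ?V" "p \<notin> indet F" for p
    proof -
      have "\<eta> \<le> fs_dist (fmap F p) ?p0" using eta(2)[OF p(2)] p(1) by force
      then obtain x where "x \<in> pline a" "fs_dist (fmap (compT M F) p) x < \<delta>"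
        using K[OF p(2)] dle by force
      then show ?thesis unfolding fs_ball_def using dle e by force
    qed
    have iii: "img_indet (compT M F) \<subseteq> ?U"
    proof
      fix q assume "q \<in> img_indet (compT M F)"
      then obtain p where p: "p \<in> indet F" "q \<in> limset (compT M F) p"
        unfolding img_indet_def IC by blast
      then obtain s where s: "\<And>j. s j \<notin> indet F" "fs_conv s p" "fs_conv (\<lambda>j. fmap (compT M F) (s j)) q"
        unfolding limset_def IC by blast
      obtain N1 where N1: "\<forall>n\<ge>N1. fs_dist (s n) p < \<eta>" using fs_conv_ev[OF s(2) eta(1)] by blast
      obtain N2 where N2: "\<forall>n\<ge>N2. fs_dist (fmap (compT M F) (s n)) q < \<epsilon>/2"
        using fs_conv_ev[OF s(3) half_gt_zero[OF e]] by blast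
      define n where "n = max N1 N2"
      have a1: "fs_dist (s n) p < \<eta>" using N1 n_def by simp
      have a2: "fs_dist (fmap (compT M F) (s n)) q < \<epsilon>/2" using N2 n_def by simp
      have "\<eta> \<le> fs_dist (fmap F (s n)) ?p0"
      proof (rule ccontr)
        assume "\<not> ?thesis"
        then have "\<eta> \<le> fs_dist (s n) p" using eta(2)[OF s(1)] p(1) by force
        then show False using a1 by simp
      qed
      then obtain x where x: "x \<in> pline a" "fs_dist (fmap (compT M F) (s n)) x < \<delta>"
        using K[OF s(1)] dle by force
      have "fs_dist q x < \<epsilon>"
        using fs_dist_tri[of q x "fmap (compT M F) (s n)"] fs_dist_sym[of q "fmap (compT M F) (s n)"] a2 x(2) dle by linarith
      then show "q \<in> ?U" unfolding fs_ball_def using x(1) by blast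
    qed
    have iv: "emeasure \<mu> ?U = 1 \<or> emeasure \<mu> ?V = 1" if "erg_inv (compT M F) \<mu>" for \<mu>
      by (rule erg_part[OF that fs_ball_open fs_ball_open]) (use dj1 dj2 i IC in auto)
    show ?thesis using i iii iv IC by blast
  qed
  show ?thesis using dpos main by blast
qed

lemma reg_point:
  assumes pr: "polyrep d C F" and jx: "jac F (rep x) \<noteq> 0"
  shows "\<exists>r>0. \<forall>p. fs_dist p x < r \<longrightarrow> jac F (rep p) \<noteq> 0"
proof (rule ccontr)
  assume "\<not> ?thesis"
  then have "\<forall>n. \<exists>p. fs_dist p x < inverse (real (Suc n)) \<and> jac F (rep p) = 0"
    by (metis inverse_positive_iff_positive of_nat_0_less_iff zero_less_Suc)
  then obtain p where p: "\<And>n. fs_dist (p n) x < inverse (real (Suc n))" "\<And>n. jac F (rep (p n)) = 0" by metis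
  obtain w where w: "\<forall>j. w j \<noteq> 0" "\<forall>j. proj (w j) = p j" "w \<longlonglongrightarrow> rep x"
    using conv_reps[OF fs_conv_inv[OF p(1)]] by blast
  have z: "jac F (w j) = 0" for j
  proof -
    obtain c where c: "c \<noteq> 0" "w j = c *s rep (p j)" using rep_of_proj w by blast
    show ?thesis unfolding c(2) jac_cone[OF pr c(1)] by (rule p(2))
  qed
  have "(\<lambda>j. jac F (w j)) \<longlonglongrightarrow> jac F (rep x)" by (rule jac_tendsto[OF pr w(3)])
  then have "jac F (rep x) = 0" unfolding z using LIMSEQ_unique tendsto_const by blast
  then show False using jx by simp
qed

lemma reg_eps:
  assumes pr: "polyrep d C F" and rv: "regular_value F q" and fin: "finite (preim F q)"
  shows "\<exists>\<epsilon>1>0. \<forall>p. p \<in> fs_ball (preim F q) \<epsilon>1 \<longrightarrow> jac F (rep p) \<noteq> 0"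
proof -
  have "\<forall>x\<in>preim F q. \<exists>r>0. \<forall>p. fs_dist p x < r \<longrightarrow> jac F (rep p) \<noteq> 0"
    using rv reg_point[OF pr] unfolding regular_value_def regular_pt_def by blast
  then obtain R where R: "\<And>x. x \<in> preim F q \<Longrightarrow> R x > 0 \<and> (\<forall>p. fs_dist p x < R x \<longrightarrow> jac F (rep p) \<noteq> 0)"
    by metis
  show ?thesis
  proof (cases "preim F q = {}")
    case True
    then show ?thesis unfolding fs_ball_def by (intro exI[of _ 1]) auto
  next
    case False
    define e1 where "e1 = Min (R ` preim F q)"
    have "e1 > 0" unfolding e1_def using fin False R by (subst Min_gr_iff) auto
    moreover have "jac F (rep p) \<noteq> 0" if pb: "p \<in> fs_ball (preim F q) e1" for p
    proof -
      obtain x where x: "x \<in> preim F q" "fs_dist p x < e1" using pb unfolding fs_ball_def by blast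
      have "e1 \<le> R x" unfolding e1_def using fin x(1) by simp
      then show ?thesis using R[OF x(1)] x(2) by simp
    qed
    ultimately show ?thesis by blast
  qed
qed



theorem mainTheorem3:
  fixes F :: "vec3 \<Rightarrow> vec3" and a v0 :: vec3 and A :: "complex^3^3"
  assumes rat: "rat_map F" and dom: "dominant F"
    and a_nz: "a \<noteq> 0" and v0_nz: "v0 \<noteq> 0"
    and p0_notin_L0: "proj v0 \<notin> pline a"
    and A_ker: "\<forall>w. A *v w = 0 \<longleftrightarrow> (\<exists>c. w = c *s v0)"
    and A_img: "range (\<lambda>w. A *v w) = {w. (\<Sum>i\<in>UNIV. a $ i * w $ i) = 0}"
    and condA: "proj v0 \<notin> img_indet F \<union> img_curve F (pline a)"
    and condB: "pline a \<inter> indet F = {}"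
  shows
   "(\<forall>\<epsilon>>0.
      fs_ball (pline a) \<epsilon> \<inter> fs_ball (preim F (proj v0)) \<epsilon> = {} \<and>
      fs_ball (pline a) \<epsilon> \<inter> indet F = {} \<and>
      fs_ball (preim F (proj v0)) \<epsilon> \<inter> indet F = {} \<longrightarrow>
      (\<exists>\<delta>>0. \<forall>M\<in>Tset A v0 \<delta>.
         (\<forall>p. p \<notin> fs_ball (preim F (proj v0)) \<epsilon> \<and> p \<notin> indet F \<longrightarrow>
              fmap (compT M F) p \<in> fs_ball (pline a) \<epsilon>) \<and>
         (\<forall>p. p \<notin> indet (compT M F) \<and> fmap (compT M F) p \<notin> fs_ball (pline a) \<epsilon> \<longrightarrow>
              p \<in> fs_ball (preim F (proj v0)) \<epsilon>) \<and>
         img_indet (compT M F) \<subseteq> fs_ball (pline a) \<epsilon> \<and>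
         (\<forall>\<mu>. erg_inv (compT M F) \<mu> \<longrightarrow>
              emeasure \<mu> (fs_ball (pline a) \<epsilon>) = 1 \<or>
              emeasure \<mu> (fs_ball (preim F (proj v0)) \<epsilon>) = 1))) \<and>
   (regular_value F (proj v0) \<and> finite (preim F (proj v0)) \<and>
      card (preim F (proj v0)) = top_degree F \<longrightarrow>
    (\<exists>\<epsilon>\<^sub>1>0. \<forall>\<epsilon>. 0 < \<epsilon> \<and> \<epsilon> < \<epsilon>\<^sub>1 \<and>
      fs_ball (pline a) \<epsilon> \<inter> fs_ball (preim F (proj v0)) \<epsilon> = {} \<and>
      fs_ball (pline a) \<epsilon> \<inter> indet F = {} \<and>
      fs_ball (preim F (proj v0)) \<epsilon> \<inter> indet F = {} \<longrightarrow>
      (\<exists>\<delta>>0. \<forall>M\<in>Tset A v0 \<delta>.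
         (\<forall>p. p \<notin> fs_ball (preim F (proj v0)) \<epsilon> \<and> p \<notin> indet F \<longrightarrow>
              fmap (compT M F) p \<in> fs_ball (pline a) \<epsilon>) \<and>
         (\<forall>p. p \<notin> indet (compT M F) \<and> fmap (compT M F) p \<notin> fs_ball (pline a) \<epsilon> \<longrightarrow>
              p \<in> fs_ball (preim F (proj v0)) \<epsilon>) \<and>
         img_indet (compT M F) \<subseteq> fs_ball (pline a) \<epsilon> \<and>
         (\<forall>\<mu>. erg_inv (compT M F) \<mu> \<longrightarrow>
              emeasure \<mu> (fs_ball (pline a) \<epsilon>) = 1 \<or>
              emeasure \<mu> (fs_ball (preim F (proj v0)) \<epsilon>) = 1) \<and>
         (\<forall>p\<in>fs_ball (preim F (proj v0)) \<epsilon>. regular_pt (compT M F) p) \<and>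
         critical_values (compT M F) \<subseteq> fs_ball (pline a) \<epsilon>)))"
proof -
  obtain d C where pr: "polyrep d C F" using rat_polyrep[OF rat] by blast
  have nA: "proj v0 \<notin> img_indet F" using condA by simp
  have P1: "\<forall>\<epsilon>>0.
      fs_ball (pline a) \<epsilon> \<inter> fs_ball (preim F (proj v0)) \<epsilon> = {} \<and>
      fs_ball (pline a) \<epsilon> \<inter> indet F = {} \<and>
      fs_ball (preim F (proj v0)) \<epsilon> \<inter> indet F = {} \<longrightarrow>
      (\<exists>\<delta>>0. \<forall>M\<in>Tset A v0 \<delta>.
         (\<forall>p. p \<notin> fs_ball (preim F (proj v0)) \<epsilon> \<and> p \<notin> indet F \<longrightarrow>
              fmap (compT M F) p \<in> fs_ball (pline a) \<epsilon>) \<and>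
         (\<forall>p. p \<notin> indet (compT M F) \<and> fmap (compT M F) p \<notin> fs_ball (pline a) \<epsilon> \<longrightarrow>
              p \<in> fs_ball (preim F (proj v0)) \<epsilon>) \<and>
         img_indet (compT M F) \<subseteq> fs_ball (pline a) \<epsilon> \<and>
         (\<forall>\<mu>. erg_inv (compT M F) \<mu> \<longrightarrow>
              emeasure \<mu> (fs_ball (pline a) \<epsilon>) = 1 \<or>
              emeasure \<mu> (fs_ball (preim F (proj v0)) \<epsilon>) = 1))"
    using part1[OF pr nA A_ker A_img] by blast
  have P2: "\<exists>\<epsilon>\<^sub>1>0. \<forall>\<epsilon>. 0 < \<epsilon> \<and> \<epsilon> < \<epsilon>\<^sub>1 \<and>
      fs_ball (pline a) \<epsilon> \<inter> fs_ball (preim F (proj v0)) \<epsilon> = {} \<and>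
      fs_ball (pline a) \<epsilon> \<inter> indet F = {} \<and>
      fs_ball (preim F (proj v0)) \<epsilon> \<inter> indet F = {} \<longrightarrow>
      (\<exists>\<delta>>0. \<forall>M\<in>Tset A v0 \<delta>.
         (\<forall>p. p \<notin> fs_ball (preim F (proj v0)) \<epsilon> \<and> p \<notin> indet F \<longrightarrow>
              fmap (compT M F) p \<in> fs_ball (pline a) \<epsilon>) \<and>
         (\<forall>p. p \<notin> indet (compT M F) \<and> fmap (compT M F) p \<notin> fs_ball (pline a) \<epsilon> \<longrightarrow>
              p \<in> fs_ball (preim F (proj v0)) \<epsilon>) \<and>
         img_indet (compT M F) \<subseteq> fs_ball (pline a) \<epsilon> \<and>
         (\<forall>\<mu>. erg_inv (compT M F) \<mu> \<longrightarrow>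
              emeasure \<mu> (fs_ball (pline a) \<epsilon>) = 1 \<or>
              emeasure \<mu> (fs_ball (preim F (proj v0)) \<epsilon>) = 1) \<and>
         (\<forall>p\<in>fs_ball (preim F (proj v0)) \<epsilon>. regular_pt (compT M F) p) \<and>
         critical_values (compT M F) \<subseteq> fs_ball (pline a) \<epsilon>)"
    if rv: "regular_value F (proj v0)" and fin: "finite (preim F (proj v0))"
  proof -
    obtain e1 where e1: "e1 > 0" "\<And>p. p \<in> fs_ball (preim F (proj v0)) e1 \<Longrightarrow> jac F (rep p) \<noteq> 0"
      using reg_eps[OF pr rv fin] by blast
    have "\<exists>\<delta>>0. \<forall>M\<in>Tset A v0 \<delta>.
         (\<forall>p. p \<notin> fs_ball (preim F (proj v0)) \<epsilon> \<and> p \<notin> indet F \<longrightarrow>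
              fmap (compT M F) p \<in> fs_ball (pline a) \<epsilon>) \<and>
         (\<forall>p. p \<notin> indet (compT M F) \<and> fmap (compT M F) p \<notin> fs_ball (pline a) \<epsilon> \<longrightarrow>
              p \<in> fs_ball (preim F (proj v0)) \<epsilon>) \<and>
         img_indet (compT M F) \<subseteq> fs_ball (pline a) \<epsilon> \<and>
         (\<forall>\<mu>. erg_inv (compT M F) \<mu> \<longrightarrow>
              emeasure \<mu> (fs_ball (pline a) \<epsilon>) = 1 \<or>
              emeasure \<mu> (fs_ball (preim F (proj v0)) \<epsilon>) = 1) \<and>
         (\<forall>p\<in>fs_ball (preim F (proj v0)) \<epsilon>. regular_pt (compT M F) p) \<and>
         critical_values (compT M F) \<subseteq> fs_ball (pline a) \<epsilon>"
      if ee: "0 < \<epsilon>" "\<epsilon> < e1"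
        and dj1: "fs_ball (pline a) \<epsilon> \<inter> fs_ball (preim F (proj v0)) \<epsilon> = {}"
        and dj2: "fs_ball (pline a) \<epsilon> \<inter> indet F = {}"
        and dj3: "fs_ball (preim F (proj v0)) \<epsilon> \<inter> indet F = {}" for \<epsilon>
    proof -
      obtain \<delta> where \<delta>: "\<delta> > 0" "\<forall>M\<in>Tset A v0 \<delta>.
         (\<forall>p. p \<notin> fs_ball (preim F (proj v0)) \<epsilon> \<and> p \<notin> indet F \<longrightarrow>
              fmap (compT M F) p \<in> fs_ball (pline a) \<epsilon>) \<and>
         (\<forall>p. p \<notin> indet (compT M F) \<and> fmap (compT M F) p \<notin> fs_ball (pline a) \<epsilon> \<longrightarrow>
              p \<in> fs_ball (preim F (proj v0)) \<epsilon>) \<and>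
         img_indet (compT M F) \<subseteq> fs_ball (pline a) \<epsilon> \<and>
         (\<forall>\<mu>. erg_inv (compT M F) \<mu> \<longrightarrow>
              emeasure \<mu> (fs_ball (pline a) \<epsilon>) = 1 \<or>
              emeasure \<mu> (fs_ball (preim F (proj v0)) \<epsilon>) = 1)"
        using part1[OF pr nA A_ker A_img ee(1) dj1 dj2 dj3] by blast
      have reg: "(\<forall>p\<in>fs_ball (preim F (proj v0)) \<epsilon>. regular_pt (compT M F) p) \<and>
         critical_values (compT M F) \<subseteq> fs_ball (pline a) \<epsilon>" if M: "M \<in> Tset A v0 \<delta>" for M
      proof -
        have inv: "invertible M" using M unfolding Tset_def by blast
        have dM: "det M \<noteq> 0" using inv invertible_det_nz by blast
        have IC: "indet (compT M F) = indet F" by (rule indet_comp[OF inv])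
        have r: "regular_pt (compT M F) p" if pV: "p \<in> fs_ball (preim F (proj v0)) \<epsilon>" for p
        proof -
          have "p \<in> fs_ball (preim F (proj v0)) e1" using pV ee unfolding fs_ball_def by force
          then have "jac F (rep p) \<noteq> 0" by (rule e1(2))
          then have "jac (compT M F) (rep p) \<noteq> 0" using jac_comp[OF pr] dM by simp
          moreover have "p \<notin> indet (compT M F)" using pV dj3 IC by blast
          ultimately show ?thesis unfolding regular_pt_def by blast
        qed
        have "critical_values (compT M F) \<subseteq> fs_ball (pline a) \<epsilon>"
        proof
          fix y assume "y \<in> critical_values (compT M F)"
          then obtain p where p: "y = fmap (compT M F) p" "p \<notin> indet (compT M F)" "\<not> regular_pt (compT M F) p"
            unfolding critical_values_def by blast
          have "p \<notin> fs_ball (preim F (proj v0)) \<epsilon>" using r p(3) by blast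
          then show "y \<in> fs_ball (pline a) \<epsilon>" using \<delta>(2) M p(1,2) IC by blast
        qed
        then show ?thesis using r by blast
      qed
      show ?thesis using \<delta> reg by blast
    qed
    then show ?thesis using e1(1) by blast
  qed
  show ?thesis using P1 P2 by blast
qed


end
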